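(* Consider a zero-one knapsack instance with $n$ items, integer capacity $W>0$, positive integer weights $w_i$ and integer profits $v_i$, and let $\mathcal{S}^*$ be its set of optimal solutions. Suppose the tables $V(i,w)$, $C(i,w)$ are given, defined by: $V(0,w)=0$, $C(0,w)=1$ for $0\le w\le W$; $V(i,w)=-\infty$, $C(i,w)=0$ for $w<0$; and for $1\le i\le n$, $0\le w\le W$, $V(i,w)=\max\{V(i-1,w),V(i-1,w-w_i)+v_i\}$ and $C(i,w)=C(i-1,w)+C(i-1,w-w_i)$ if $V(i-1,w)=V(i-1,w-w_i)+v_i$, $C(i,w)=C(i-1,w)$ if $V(i-1,w)>V(i-1,w-w_i)+v_i$, and $C(i,w)=C(i-1,w-w_i)$ otherwise. Consider the algorithm that, given a positive integer $k$, repeats the following procedure $k$ times independently and returns the collection of the $k$ outputs: start with $L=\emptyset$, $i=n$, $w=W$; while $i>0$ and $w>0$: if $w_i\le w$ and $V(i,w)=V(i-1,w)=V(i-1,w-w_i)+v_i$, then with probability $C(i-1,w-w_i)/C(i,w)$ add $i$ to $L$ and set $w\leftarrow w-w_i$; else if $V(i,w)>V(i-1,w)$, add $i$ to $L$ and set $w\leftarrow w-w_i$; then set $i\leftarrow i-1$; output $L$. This algorithm produces $k$ samples, each distributed uniformly at random on $\mathcal{S}^*$, in time $O(kn)$.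
   Context: For $s\subseteq[n]=\{1,\dots,n\}$ let $w(s)=\sum_{i\in s}w_i$ and $v(s)=\sum_{i\in s}v_i$. The set of feasible solutions is $\mathcal{S}=\{s\subseteq[n]: w(s)\le W\}$, $v_{\max}=\max_{s\in\mathcal{S}}v(s)$, and $\mathcal{S}^*=\{s\in\mathcal{S}: v(s)=v_{\max}\}$. Running time counts each table lookup, comparison, arithmetic operation and random draw as a constant-time operation. *)

theory Defs
  imports "HOL-Probability.Probability"
begin

text \<open>Knapsack instance: n items indexed 1..n, weights wt i, profits v i (integers),
  capacity W.  Items outside 1..n are irrelevant.\<close>

definition wsum :: "(nat \<Rightarrow> int) \<Rightarrow> nat set \<Rightarrow> int" where
  "wsum f s = (\<Sum>i\<in>s. f i)"

definition feasible :: "nat \<Rightarrow> (nat \<Rightarrow> int) \<Rightarrow> int \<Rightarrow> nat set set" where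
  "feasible n wt W = {s. s \<subseteq> {1..n} \<and> wsum wt s \<le> W}"

definition vmax :: "nat \<Rightarrow> (nat \<Rightarrow> int) \<Rightarrow> (nat \<Rightarrow> int) \<Rightarrow> int \<Rightarrow> int" where
  "vmax n wt v W = Max (wsum v ` feasible n wt W)"

definition opt_sols :: "nat \<Rightarrow> (nat \<Rightarrow> int) \<Rightarrow> (nat \<Rightarrow> int) \<Rightarrow> int \<Rightarrow> nat set set" where
  "opt_sols n wt v W = {s \<in> feasible n wt W. wsum v s = vmax n wt v W}"

text \<open>The DP table V(i,w), with -\<infinity> for w < 0.  (For w > W the paper leaves it
  undefined; we use the same recurrence, which is never consulted there.)\<close>
fun Vtab :: "(nat \<Rightarrow> int) \<Rightarrow> (nat \<Rightarrow> int) \<Rightarrow> nat \<Rightarrow> int \<Rightarrow> ereal" where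
  "Vtab wt v 0 w = (if w < 0 then -\<infinity> else 0)"
| "Vtab wt v (Suc i) w = (if w < 0 then -\<infinity> else
      max (Vtab wt v i w) (Vtab wt v i (w - wt (Suc i)) + ereal (v (Suc i))))"

fun Ctab :: "(nat \<Rightarrow> int) \<Rightarrow> (nat \<Rightarrow> int) \<Rightarrow> nat \<Rightarrow> int \<Rightarrow> nat" where
  "Ctab wt v 0 w = (if w < 0 then 0 else 1)"
| "Ctab wt v (Suc i) w = (if w < 0 then 0 else
      (if Vtab wt v i w = Vtab wt v i (w - wt (Suc i)) + ereal (v (Suc i))
       then Ctab wt v i w + Ctab wt v i (w - wt (Suc i))
       else if Vtab wt v i w > Vtab wt v i (w - wt (Suc i)) + ereal (v (Suc i))
       then Ctab wt v i w
       else Ctab wt v i (w - wt (Suc i))))"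

text \<open>The result is a
  distribution over pairs (L, t): L is the output set (items added from the current i
  downwards), t the number of elementary operations (table lookups, comparisons,
  arithmetic operations, random draws) executed.  Operation counts per step:
  loop test (i>0, w>0): 2 comparisons;
  first condition: lookup w_i, compare with w (2); lookups V(i,w), V(i-1,w),
    subtraction w-w_i, lookup V(i-1,w-w_i), lookup v_i, addition, 2 comparisons (8);
  random branch: 2 lookups of C, division, random draw, comparison, insertion into L,
    subtraction (7);
  second condition: 2 lookups, 1 comparison (3); taking it: insertion, subtraction (2);
  decrement of i: 1; output: 1.\<close>
fun sample_run :: "(nat \<Rightarrow> int) \<Rightarrow> (nat \<Rightarrow> int) \<Rightarrow> nat \<Rightarrow> int \<Rightarrow> (nat set \<times> nat) pmf" where
  "sample_run wt v 0 w = return_pmf ({}, 1 + 1)"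
| "sample_run wt v (Suc j) w =
     (if \<not> (0 < w) then return_pmf ({}, 2 + 1)
      else if wt (Suc j) \<le> w \<and> Vtab wt v (Suc j) w = Vtab wt v j w
              \<and> Vtab wt v j w = Vtab wt v j (w - wt (Suc j)) + ereal (v (Suc j))
      then do {
        b \<leftarrow> bernoulli_pmf (real (Ctab wt v j (w - wt (Suc j))) / real (Ctab wt v (Suc j) w));
        (L, t) \<leftarrow> sample_run wt v j (if b then w - wt (Suc j) else w);
        return_pmf (if b then insert (Suc j) L else L, t + 2 + 10 + 7 + 1)
      }
      else if Vtab wt v (Suc j) w > Vtab wt v j w
      then map_pmf (\<lambda>(L, t). (insert (Suc j) L, t + 2 + 10 + 3 + 2 + 1))
             (sample_run wt v j (w - wt (Suc j)))
      else map_pmf (\<lambda>(L, t). (L, t + 2 + 10 + 3 + 1))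
             (sample_run wt v j w))"

fun iid_list :: "nat \<Rightarrow> 'a pmf \<Rightarrow> 'a list pmf" where
  "iid_list 0 p = return_pmf []"
| "iid_list (Suc k) p = do { x \<leftarrow> p; xs \<leftarrow> iid_list k p; return_pmf (x # xs) }"

definition knapsack_sampler ::
  "nat \<Rightarrow> (nat \<Rightarrow> int) \<Rightarrow> (nat \<Rightarrow> int) \<Rightarrow> int \<Rightarrow> nat \<Rightarrow> (nat set list \<times> nat) pmf" where
  "knapsack_sampler n wt v W k =
     map_pmf (\<lambda>rs. (map fst rs, sum_list (map snd rs))) (iid_list k (sample_run wt v n W))"

end

theory Submission
  imports Defs
begin

lemma mix_pmf:
  assumes "finite A" "finite B" "A \<noteq> {}" "B \<noteq> {}" "A \<inter> B = {}"
  shows "bernoulli_pmf (real (card B) / real (card (A \<union> B))) \<bind> (\<lambda>b. if b then pmf_of_set B else pmf_of_set A)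
         = pmf_of_set (A \<union> B)"
proof (rule pmf_eqI)
  fix x
  have cU: "card (A \<union> B) = card A + card B" using assms card_Un_disjoint by blast
  have pA: "card A > 0" "card B > 0" using assms by auto
  let ?p = "real (card B) / real (card (A \<union> B))"
  have p01: "0 \<le> ?p" "?p \<le> 1" using cU pA by auto
  have "pmf (bernoulli_pmf ?p \<bind> (\<lambda>b. if b then pmf_of_set B else pmf_of_set A)) x
     = pmf (pmf_of_set B) x * ?p + pmf (pmf_of_set A) x * (1 - ?p)"
    by (simp add: pmf_bind p01)
  also have "\<dots> = pmf (pmf_of_set (A \<union> B)) x"
    proof -
    have d: "real (card A) + real (card B) > 0" using pA by simp
    show ?thesis using assms pA cU d by (cases "x \<in> A"; cases "x \<in> B") (auto simp: indicator_def field_simps)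
  qed
  finally show "pmf (bernoulli_pmf ?p \<bind> (\<lambda>b. if b then pmf_of_set B else pmf_of_set A)) x = pmf (pmf_of_set (A \<union> B)) x" .
qed

lemma iid_map: "map_pmf (map f) (iid_list k p) = iid_list k (map_pmf f p)"
  proof (induction k)
  case (Suc k) then show ?case by (simp add: Suc.IH[symmetric] map_bind_pmf bind_map_pmf)
qed simp

lemma iid_set: "xs \<in> set_pmf (iid_list k p) \<Longrightarrow> length xs = k \<and> set xs \<subseteq> set_pmf p"
  by (induction k arbitrary: xs) fastforce+

lemma sum_list_bound: "(\<forall>x\<in>set xs. f x \<le> (c::nat)) \<Longrightarrow> sum_list (map f xs) \<le> length xs * c"
  by (induction xs) auto

lemma time_bound: "r \<in> set_pmf (sample_run wt v j w) \<Longrightarrow> snd r \<le> 20 * j + 3"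
proof (induction j arbitrary: w r)
  case 0 then show ?case by simp
next
  case (Suc j)
  show ?case using Suc.prems Suc.IH
    by (auto simp del: Vtab.simps split: if_splits prod.splits) fastforce+
qed


definition Fs :: "(nat \<Rightarrow> int) \<Rightarrow> nat \<Rightarrow> int \<Rightarrow> nat set set" where
  "Fs wt j w = {S. S \<subseteq> {1..j} \<and> wsum wt S \<le> w}"

definition Os :: "(nat \<Rightarrow> int) \<Rightarrow> (nat \<Rightarrow> int) \<Rightarrow> nat \<Rightarrow> int \<Rightarrow> nat set set" where
  "Os wt v j w = {S \<in> Fs wt j w. ereal (wsum v S) = Vtab wt v j w}"

lemma wsum_nonneg: "\<forall>i\<in>{1..j}. wt i > 0 \<Longrightarrow> S \<subseteq> {1..j} \<Longrightarrow> wsum wt S \<ge> 0"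
  unfolding wsum_def by (rule sum_nonneg) (auto simp: less_imp_le)

lemma Fs_neg: "\<forall>i\<in>{1..j}. wt i > 0 \<Longrightarrow> w < 0 \<Longrightarrow> Fs wt j w = {}"
proof -
  assume a: "\<forall>i\<in>{1..j}. wt i > 0" "w < 0"
  have "S \<notin> Fs wt j w" for S
  proof
    assume "S \<in> Fs wt j w"
    then have "S \<subseteq> {1..j}" "wsum wt S \<le> w" unfolding Fs_def by auto
    moreover have "wsum wt S \<ge> 0" using wsum_nonneg[OF a(1)] calculation(1) by blast
    ultimately show False using a(2) by linarith
  qed
  then show ?thesis by blast
qed

lemma Fs_finite: "finite (Fs wt j w)"
proof -
  have "Fs wt j w \<subseteq> Pow {1..j}" unfolding Fs_def by auto
  then show ?thesis by (rule finite_subset) simp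
qed

lemma Os_finite: "finite (Os wt v j w)"
  unfolding Os_def using Fs_finite by simp

lemma wsum_insert: "S \<subseteq> {1..j} \<Longrightarrow> wsum f (insert (Suc j) S) = f (Suc j) + wsum f S"
proof -
  assume "S \<subseteq> {1..j}"
  then have "finite S" "Suc j \<notin> S" by (auto intro: finite_subset)
  then show ?thesis unfolding wsum_def by simp
qed

lemma Fs_Suc: "Fs wt (Suc j) w = Fs wt j w \<union> insert (Suc j) ` Fs wt j (w - wt (Suc j))"
proof (rule set_eqI)
  fix S
  show "S \<in> Fs wt (Suc j) w \<longleftrightarrow> S \<in> Fs wt j w \<union> insert (Suc j) ` Fs wt j (w - wt (Suc j))"
  proof (cases "Suc j \<in> S")
    case True
    let ?S' = "S - {Suc j}"
    have e: "S = insert (Suc j) ?S'" using True by auto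
    have "S \<subseteq> {1..Suc j} \<longleftrightarrow> ?S' \<subseteq> {1..j}" using True by auto
    moreover have "?S' \<subseteq> {1..j} \<Longrightarrow> wsum wt S = wt (Suc j) + wsum wt ?S'"
      using e wsum_insert by metis
    ultimately have k1: "S \<in> Fs wt (Suc j) w \<longleftrightarrow> ?S' \<in> Fs wt j (w - wt (Suc j))"
      unfolding Fs_def mem_Collect_eq by (metis add.commute le_diff_eq)
    have "S \<notin> Fs wt j w" using True unfolding Fs_def by auto
    moreover have "S \<in> insert (Suc j) ` Fs wt j (w - wt (Suc j)) \<longleftrightarrow> ?S' \<in> Fs wt j (w - wt (Suc j))"
    proof
      assume "S \<in> insert (Suc j) ` Fs wt j (w - wt (Suc j))"
      then obtain T where T: "T \<in> Fs wt j (w - wt (Suc j))" "S = insert (Suc j) T" by auto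
      then have "Suc j \<notin> T" unfolding Fs_def by auto
      then have "T = ?S'" using T by auto
      then show "?S' \<in> Fs wt j (w - wt (Suc j))" using T by simp
    next
      assume "?S' \<in> Fs wt j (w - wt (Suc j))"
      then show "S \<in> insert (Suc j) ` Fs wt j (w - wt (Suc j))" using e by blast
    qed
    ultimately show ?thesis using k1 by blast
  next
    case False
    then have "S \<subseteq> {1..Suc j} \<longleftrightarrow> S \<subseteq> {1..j}" by (auto simp: le_Suc_eq)
    moreover have "S \<notin> insert (Suc j) ` Fs wt j (w - wt (Suc j))" using False by auto
    ultimately show ?thesis unfolding Fs_def by auto
  qed
qed

lemma V_fin: "w \<ge> 0 \<Longrightarrow> Vtab wt v j w \<ge> 0"
proof (induction j)
  case (Suc j) then show ?case by (auto simp del: Vtab.simps simp: Vtab.simps(2)[of wt v j w] intro: order.trans max.cobounded1)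
qed simp

lemma V_neg: "w < 0 \<Longrightarrow> Vtab wt v j w = -\<infinity>"
  by (cases j) auto

lemma V_props:
  assumes "\<forall>i\<in>{1..j}. wt i > 0" "w \<ge> 0"
  shows "(\<exists>S\<in>Fs wt j w. ereal (wsum v S) = Vtab wt v j w) \<and> (\<forall>S\<in>Fs wt j w. ereal (wsum v S) \<le> Vtab wt v j w)"
  using assms
proof (induction j arbitrary: w)
  case 0
  have "Fs wt 0 w = {{}}" using 0 unfolding Fs_def wsum_def by auto
  then show ?case using 0 by (simp add: wsum_def)
next
  case (Suc j)
  have pos: "\<forall>i\<in>{1..j}. wt i > 0" using Suc.prems by auto
  let ?w' = "w - wt (Suc j)"
  let ?a = "Vtab wt v j w" and ?b = "Vtab wt v j ?w' + ereal (v (Suc j))"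
  have V: "Vtab wt v (Suc j) w = max ?a ?b" using Suc.prems by simp
  from Suc.IH[OF pos Suc.prems(2)] obtain S0 where S0: "S0 \<in> Fs wt j w" "ereal (wsum v S0) = ?a"
    and ub: "\<forall>S\<in>Fs wt j w. ereal (wsum v S) \<le> ?a" by blast
  have ub2: "ereal (wsum v S) \<le> ?b" if Sin: "S \<in> insert (Suc j) ` Fs wt j ?w'" for S
  proof -
    obtain T where T: "T \<in> Fs wt j ?w'" "S = insert (Suc j) T" using Sin by blast
    have "?w' \<ge> 0" using T(1) Fs_neg[OF pos, of ?w'] by (cases "?w' < 0") auto
    then have "ereal (wsum v T) \<le> Vtab wt v j ?w'" using Suc.IH[OF pos] T(1) by blast
    moreover have "wsum v S = v (Suc j) + wsum v T" using T wsum_insert unfolding Fs_def by blast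
    ultimately have "ereal (wsum v S) = ereal (wsum v T) + ereal (v (Suc j))"
      by simp
    also have "\<dots> \<le> ?b" by (rule add_right_mono) fact
    finally show ?thesis .
  qed
  show ?case
  proof (cases "?a \<ge> ?b")
    case True
    then have VV: "Vtab wt v (Suc j) w = ?a" using V by (simp add: max_def)
    have "S0 \<in> Fs wt (Suc j) w" using S0(1) Fs_Suc[of wt j w] by blast
    moreover have "\<forall>S\<in>Fs wt (Suc j) w. ereal (wsum v S) \<le> ?a"
    proof
      fix S assume "S \<in> Fs wt (Suc j) w"
      then consider "S \<in> Fs wt j w" | "S \<in> insert (Suc j) ` Fs wt j ?w'" using Fs_Suc[of wt j w] by blast
      then show "ereal (wsum v S) \<le> ?a"
        by cases (use ub in blast, use ub2 True in \<open>blast intro: order.trans\<close>)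
    qed
    ultimately show ?thesis using S0(2) VV by metis
  next
    case False
    then have "Vtab wt v j ?w' \<noteq> -\<infinity>" by auto
    then have w': "?w' \<ge> 0" using V_neg[of ?w' wt v j] by linarith
    obtain T where T: "T \<in> Fs wt j ?w'" "ereal (wsum v T) = Vtab wt v j ?w'" using Suc.IH[OF pos w'] by blast
    have "wsum v (insert (Suc j) T) = v (Suc j) + wsum v T" using T wsum_insert unfolding Fs_def by blast
    then have "ereal (wsum v (insert (Suc j) T)) = ereal (wsum v T) + ereal (v (Suc j))" by simp
    then have "ereal (wsum v (insert (Suc j) T)) = ?b" using T(2) by simp
    moreover have "insert (Suc j) T \<in> Fs wt (Suc j) w" using Fs_Suc[of wt j w] T(1) by blast
    moreover have VV: "Vtab wt v (Suc j) w = ?b" using V False by (metis max.absorb2 nle_le)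
    moreover have "\<forall>S\<in>Fs wt (Suc j) w. ereal (wsum v S) \<le> ?b"
    proof
      fix S assume "S \<in> Fs wt (Suc j) w"
      then consider "S \<in> Fs wt j w" | "S \<in> insert (Suc j) ` Fs wt j ?w'" using Fs_Suc[of wt j w] by blast
      then show "ereal (wsum v S) \<le> ?b"
      proof cases
        case 1 then have "ereal (wsum v S) \<le> ?a" using ub by blast
        then show ?thesis using False by simp
      qed (use ub2 in blast)
    qed
    ultimately show ?thesis by metis
  qed
qed


lemma inj_ins: "inj_on (insert (Suc j)) (Fs wt j w)"
proof (rule inj_onI)
  fix S T assume "S \<in> Fs wt j w" "T \<in> Fs wt j w" "insert (Suc j) S = insert (Suc j) T"
  moreover have "Suc j \<notin> S" "Suc j \<notin> T" using calculation(1,2) unfolding Fs_def by auto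
  ultimately show "S = T" by (metis insert_ident)
qed

lemma Os_sub: "Os wt v j w \<subseteq> Fs wt j w" unfolding Os_def by auto

lemma Os_neg: "\<forall>i\<in>{1..j}. wt i > 0 \<Longrightarrow> w < 0 \<Longrightarrow> Os wt v j w = {}"
  using Fs_neg Os_sub by blast

lemma Os_ne: "\<forall>i\<in>{1..j}. wt i > 0 \<Longrightarrow> w \<ge> 0 \<Longrightarrow> Os wt v j w \<noteq> {}"
  using V_props[of j wt w v] unfolding Os_def by blast

lemma Os_Suc:
  fixes v :: "nat \<Rightarrow> int"
  assumes pos: "\<forall>i\<in>{1..Suc j}. wt i > 0" and w: "w \<ge> 0"
  defines "a \<equiv> Vtab wt v j w" and "b \<equiv> Vtab wt v j (w - wt (Suc j)) + ereal (v (Suc j))"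
  shows "Os wt v (Suc j) w = (if a = b then Os wt v j w \<union> insert (Suc j) ` Os wt v j (w - wt (Suc j))
            else if a > b then Os wt v j w else insert (Suc j) ` Os wt v j (w - wt (Suc j)))"
    (is "_ = ?R")
proof (rule set_eqI)
  fix S
  let ?w' = "w - wt (Suc j)"
  have pos': "\<forall>i\<in>{1..j}. wt i > 0" using pos by auto
  have V: "Vtab wt v (Suc j) w = max a b" using w by (simp add: a_def b_def)
  have "S \<in> Fs wt (Suc j) w \<or> S \<notin> Fs wt (Suc j) w" by blast
  then show "S \<in> Os wt v (Suc j) w \<longleftrightarrow> S \<in> ?R"
  proof
    assume "S \<in> Fs wt (Suc j) w"
    then consider "S \<in> Fs wt j w" | T where "T \<in> Fs wt j ?w'" "S = insert (Suc j) T"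
      using Fs_Suc[of wt j w] by blast
    then show ?thesis
    proof cases
      case 1
      have le: "ereal (wsum v S) \<le> a" using V_props[OF pos' w] 1 a_def by blast
      have nB: "S \<notin> insert (Suc j) ` Os wt v j ?w'" using 1 Os_sub unfolding Fs_def by auto
      have "S \<in> Os wt v (Suc j) w \<longleftrightarrow> ereal (wsum v S) = max a b"
        using 1 Fs_Suc[of wt j w] V unfolding Os_def by auto
      also have "\<dots> \<longleftrightarrow> (b \<le> a \<and> ereal (wsum v S) = a)" using le
        by (metis max.absorb1 max.absorb2 max.cobounded2 nle_le order.trans)
      also have "\<dots> \<longleftrightarrow> S \<in> ?R" using nB 1 unfolding Os_def a_def b_def by auto
      finally show ?thesis .
    next
      case 2
      have w': "?w' \<ge> 0" using 2 Fs_neg[OF pos', of ?w'] by (cases "?w' < 0") auto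
      have le: "ereal (wsum v T) \<le> Vtab wt v j ?w'" using V_props[OF pos' w'] 2 by blast
      obtain r where r: "Vtab wt v j ?w' = ereal r" using V_props[OF pos' w', of v] by metis
      have sv: "wsum v S = v (Suc j) + wsum v T" using 2 wsum_insert unfolding Fs_def by blast
      have nA: "S \<notin> Os wt v j w"
      proof
        assume "S \<in> Os wt v j w"
        then have "S \<subseteq> {1..j}" using Os_sub[of wt v j w] unfolding Fs_def by blast
        then show False using 2 by auto
      qed
      have inB: "S \<in> insert (Suc j) ` Os wt v j ?w' \<longleftrightarrow> T \<in> Os wt v j ?w'"
        using 2 inj_ins[of j wt ?w'] Os_sub[of wt v j ?w'] by (auto simp: inj_on_eq_iff)
      have "S \<in> Os wt v (Suc j) w \<longleftrightarrow> ereal (wsum v S) = max a b"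
        using 2 Fs_Suc[of wt j w] V unfolding Os_def by auto
      also have "\<dots> \<longleftrightarrow> (a \<le> b \<and> ereal (wsum v T) = Vtab wt v j ?w')"
      proof -
        have b: "b = ereal (r + v (Suc j))" unfolding b_def r by simp
        have vs: "ereal (wsum v S) = ereal (v (Suc j) + wsum v T)" using sv by simp
        have vle: "wsum v T \<le> r" using le r by simp
        show ?thesis
        proof (cases "a \<le> b")
          case True
          then have "max a b = b" by (simp add: max_def)
          then show ?thesis using True vs b r by auto
        next
          case False
          then have "max a b = a" "b < a" by (auto simp: max_def)
          moreover have "ereal (wsum v S) \<le> b" using vs b vle by simp
          ultimately show ?thesis using False by auto
        qed
      qed
      also have "\<dots> \<longleftrightarrow> S \<in> ?R" using nA inB 2 unfolding Os_def by auto
      finally show ?thesis .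
    qed
  next
    assume nF: "S \<notin> Fs wt (Suc j) w"
    then have "S \<notin> Fs wt j w \<and> S \<notin> insert (Suc j) ` Fs wt j ?w'" using Fs_Suc[of wt j w] by blast
    then have "S \<notin> ?R" using Os_sub[of wt v j] by auto
    moreover have "S \<notin> Os wt v (Suc j) w" using nF Os_sub by blast
    ultimately show ?thesis by blast
  qed
qed


lemma Os_0: "w \<ge> 0 \<Longrightarrow> Os wt v 0 w = {{}}"
  unfolding Os_def Fs_def wsum_def by auto

lemma Os_zero: "\<forall>i\<in>{1..j}. wt i > 0 \<Longrightarrow> Os wt v j 0 = {{}}"
proof -
  assume pos: "\<forall>i\<in>{1..j}. wt i > 0"
  have F: "Fs wt j 0 = {{}}"
  proof
    show "Fs wt j 0 \<subseteq> {{}}"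
    proof
      fix S assume S: "S \<in> Fs wt j 0"
      then have Ss: "S \<subseteq> {1..j}" "wsum wt S \<le> 0" unfolding Fs_def by auto
      have "finite S" using Ss(1) finite_subset by blast
      show "S \<in> {{}}"
      proof (rule ccontr)
        assume "S \<notin> {{}}"
        then obtain x where x: "x \<in> S" by auto
        have "wsum wt S = wt x + wsum wt (S - {x})" unfolding wsum_def
          using \<open>finite S\<close> x by (simp add: sum.remove)
        moreover have "wsum wt (S - {x}) \<ge> 0" using wsum_nonneg[OF pos] Ss(1) by blast
        moreover have "wt x > 0" using pos Ss(1) x by auto
        ultimately show False using Ss(2) by linarith
      qed
    qed
    show "{{}} \<subseteq> Fs wt j 0" unfolding Fs_def wsum_def by simp
  qed
  have "Os wt v j 0 \<subseteq> {{}}" using Os_sub[of wt v j 0] F by simp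
  moreover have "Os wt v j 0 \<noteq> {}" using Os_ne[OF pos, of 0 v] by simp
  ultimately show ?thesis by (metis subset_singletonD)
qed

lemma C_card: "\<forall>i\<in>{1..j}. wt i > 0 \<Longrightarrow> Ctab wt v j w = card (Os wt v j w)"
proof (induction j arbitrary: w)
  case 0
  then show ?case by (cases "w < 0") (auto simp: Os_neg Os_0)
next
  case (Suc j)
  have pos': "\<forall>i\<in>{1..j}. wt i > 0" using Suc.prems by auto
  show ?case
  proof (cases "w < 0")
    case True then show ?thesis using Os_neg[OF Suc.prems True] by simp
  next
    case False
    let ?w' = "w - wt (Suc j)"
    have c2: "card (insert (Suc j) ` Os wt v j ?w') = card (Os wt v j ?w')"
      using inj_ins Os_sub by (metis card_image inj_on_subset)
    have disj: "Os wt v j w \<inter> insert (Suc j) ` Os wt v j ?w' = {}"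
      using Os_sub[of wt v j w] unfolding Fs_def by auto
    have "card (Os wt v j w \<union> insert (Suc j) ` Os wt v j ?w') = card (Os wt v j w) + card (Os wt v j ?w')"
      using card_Un_disjoint[OF Os_finite finite_imageI[OF Os_finite] disj] c2 by simp
    define a where "a = Vtab wt v j w"
    define b where "b = Vtab wt v j ?w' + ereal (v (Suc j))"
    have Cs: "Ctab wt v (Suc j) w = (if a = b then Ctab wt v j w + Ctab wt v j ?w'
       else if a > b then Ctab wt v j w else Ctab wt v j ?w')"
      using False unfolding a_def b_def by (simp only: Ctab.simps if_False)
    have Ou: "Os wt v (Suc j) w = (if a = b then Os wt v j w \<union> insert (Suc j) ` Os wt v j ?w'
            else if a > b then Os wt v j w else insert (Suc j) ` Os wt v j ?w')"
      unfolding a_def b_def using Os_Suc[OF Suc.prems, of w v] False by simp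
    have I1: "Ctab wt v j w = card (Os wt v j w)" "Ctab wt v j ?w' = card (Os wt v j ?w')"
      using Suc.IH[OF pos'] by auto
    show ?thesis
    proof (cases "a = b")
      case True then show ?thesis using Cs Ou I1 \<open>card (_ \<union> _) = _\<close> by simp
    next
      case F2: False
      show ?thesis
      proof (cases "a > b")
        case True then show ?thesis using Cs Ou I1 F2 by simp
      next
        case False then show ?thesis using Cs Ou I1 F2 c2 by simp
      qed
    qed
  qed
qed


lemma map_fst_bind: "map_pmf fst (X \<bind> (\<lambda>(L, t). return_pmf (f L, g t))) = map_pmf f (map_pmf fst X)"
  by (simp add: map_pmf_def bind_assoc_pmf bind_return_pmf case_prod_beta')

lemma map_fst_map: "map_pmf fst (map_pmf (\<lambda>(L, t). (f L, g t)) X) = map_pmf f (map_pmf fst X)"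
  by (simp add: pmf.map_comp o_def case_prod_beta')

lemma sample_correct:
  "\<forall>i\<in>{1..j}. wt i > 0 \<Longrightarrow> w \<ge> 0 \<Longrightarrow> map_pmf fst (sample_run wt v j w) = pmf_of_set (Os wt v j w)"
proof (induction j arbitrary: w)
  case 0
  then show ?case by (simp add: Os_0 pmf_of_set_singleton)
next
  case (Suc j)
  have pos': "\<forall>i\<in>{1..j}. wt i > 0" using Suc.prems by auto
  show ?case
  proof (cases "w = 0")
    case True
    then show ?thesis using Os_zero[OF Suc.prems(1), of v] by (simp add: pmf_of_set_singleton)
  next
    case False
    then have w0: "0 < w" using Suc.prems(2) by simp
    let ?w' = "w - wt (Suc j)"
    define a where "a = Vtab wt v j w"
    define b where "b = Vtab wt v j ?w' + ereal (v (Suc j))"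
    have V: "Vtab wt v (Suc j) w = max a b" using w0 unfolding a_def b_def by simp
    have a0: "a \<ge> 0" unfolding a_def using V_fin Suc.prems(2) by blast
    have bfin: "b \<noteq> -\<infinity> \<Longrightarrow> ?w' \<ge> 0"
    proof -
      assume "b \<noteq> -\<infinity>"
      then have "Vtab wt v j ?w' \<noteq> -\<infinity>" unfolding b_def by auto
      then show ?thesis using V_neg[of ?w' wt v j] by linarith
    qed
    have c1: "(wt (Suc j) \<le> w \<and> Vtab wt v (Suc j) w = Vtab wt v j w
              \<and> Vtab wt v j w = Vtab wt v j (w - wt (Suc j)) + ereal (v (Suc j))) = (a = b)"
    proof
      assume "a = b"
      then have "?w' \<ge> 0" using bfin a0 by auto
      then show "wt (Suc j) \<le> w \<and> Vtab wt v (Suc j) w = Vtab wt v j w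
              \<and> Vtab wt v j w = Vtab wt v j (w - wt (Suc j)) + ereal (v (Suc j))"
        using V \<open>a = b\<close> unfolding a_def b_def by simp
    qed (simp add: a_def b_def)
    have c2: "(Vtab wt v (Suc j) w > Vtab wt v j w) = (b > a)"
      using V unfolding a_def by (auto simp: max_def)
    have c0: "(0 < w) = True" using w0 by simp
    note sr = sample_run.simps(2)[of wt v j w]
    have OS: "Os wt v (Suc j) w = (if a = b then Os wt v j w \<union> insert (Suc j) ` Os wt v j ?w'
            else if a > b then Os wt v j w else insert (Suc j) ` Os wt v j ?w')"
      unfolding a_def b_def using Os_Suc[OF Suc.prems(1) Suc.prems(2), of v] by simp
    show ?thesis
    proof (cases "a = b")
      case True
      have w': "?w' \<ge> 0" using bfin a0 True by auto
      let ?A = "Os wt v j w" and ?B = "insert (Suc j) ` Os wt v j ?w'"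
      let ?p = "real (Ctab wt v j ?w') / real (Ctab wt v (Suc j) w)"
      have run: "sample_run wt v (Suc j) w = bernoulli_pmf ?p \<bind> (\<lambda>bb.
          sample_run wt v j (if bb then ?w' else w) \<bind> (\<lambda>(L, t).
          return_pmf (if bb then insert (Suc j) L else L, t + 2 + 10 + 7 + 1)))"
        by (simp only: sr c0 c1 True simp_thms if_True if_False)
      have "map_pmf fst (sample_run wt v (Suc j) w) = bernoulli_pmf ?p \<bind> (\<lambda>bb.
          if bb then map_pmf (insert (Suc j)) (map_pmf fst (sample_run wt v j ?w'))
          else map_pmf (\<lambda>L. L) (map_pmf fst (sample_run wt v j w)))"
      proof -
        have step: "map_pmf fst (sample_run wt v j (if bb then ?w' else w) \<bind> (\<lambda>(L, t).
          return_pmf (if bb then insert (Suc j) L else L, t + 2 + 10 + 7 + 1))) =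
          (if bb then map_pmf (insert (Suc j)) (map_pmf fst (sample_run wt v j ?w'))
          else map_pmf (\<lambda>L. L) (map_pmf fst (sample_run wt v j w)))" for bb
          by (cases bb) (simp_all only: if_True if_False map_fst_bind)
        show ?thesis unfolding run by (subst map_bind_pmf) (simp only: step)
      qed
      also have "\<dots> = bernoulli_pmf ?p \<bind> (\<lambda>bb. if bb then pmf_of_set ?B else pmf_of_set ?A)"
        using Suc.IH[OF pos' w'] Suc.IH[OF pos' Suc.prems(2)]
          map_pmf_of_set_inj[OF inj_on_subset[OF inj_ins Os_sub] Os_ne[OF pos' w'] Os_finite, of v]
        by (simp only: pmf.map_ident)
      also have "?p = real (card ?B) / real (card (?A \<union> ?B))"
      proof -
        have "card ?B = card (Os wt v j ?w')"
          using inj_ins Os_sub by (metis card_image inj_on_subset)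
        then show ?thesis using C_card[OF pos'] C_card[OF Suc.prems(1)] OS True by simp
      qed
      also have "bernoulli_pmf (real (card ?B) / real (card (?A \<union> ?B))) \<bind>
                   (\<lambda>bb. if bb then pmf_of_set ?B else pmf_of_set ?A) = pmf_of_set (?A \<union> ?B)"
      proof (rule mix_pmf)
        show "?A \<inter> ?B = {}" using Os_sub[of wt v j w] unfolding Fs_def by auto
      qed (use Os_finite Os_ne[OF pos' w'] Os_ne[OF pos' Suc.prems(2)] in auto)
      finally show ?thesis using OS True by simp
    next
      case F1: False
      show ?thesis
      proof (cases "b > a")
        case True
        have w': "?w' \<ge> 0" using bfin a0 True by auto
        have run: "sample_run wt v (Suc j) w = map_pmf (\<lambda>(L, t). (insert (Suc j) L, t + 2 + 10 + 3 + 2 + 1))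
             (sample_run wt v j ?w')"
          by (simp only: sr c0 c1 c2 F1 True simp_thms if_True if_False)
        have nba: "\<not> b < a" using True by auto
        show ?thesis unfolding run map_fst_map Suc.IH[OF pos' w'] using OS F1 True nba
          map_pmf_of_set_inj[OF inj_on_subset[OF inj_ins Os_sub] Os_ne[OF pos' w'] Os_finite]
          by simp
      next
        case False
        have run: "sample_run wt v (Suc j) w = map_pmf (\<lambda>(L, t). (L, t + 2 + 10 + 3 + 1))
             (sample_run wt v j w)"
          by (simp only: sr c0 c1 c2 F1 False simp_thms if_True if_False)
        have "a > b" using F1 False by auto
        show ?thesis unfolding run map_fst_map Suc.IH[OF pos' Suc.prems(2)] using OS F1 \<open>a > b\<close>
          by (simp add: pmf.map_ident)
      qed
    qed
  qed
qed


lemma Os_opt: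
  assumes pos: "\<forall>i\<in>{1..n}. wt i > 0" and W: "W \<ge> 0"
  shows "Os wt v n W = opt_sols n wt v W"
proof -
  have feq: "feasible n wt W = Fs wt n W" unfolding feasible_def Fs_def by simp
  obtain S0 where S0: "S0 \<in> Fs wt n W" "ereal (wsum v S0) = Vtab wt v n W"
    and ub: "\<forall>S\<in>Fs wt n W. ereal (wsum v S) \<le> Vtab wt v n W"
    using V_props[OF pos W, of v] by blast
  have "vmax n wt v W = wsum v S0"
    unfolding vmax_def feq
  proof (rule Max_eqI)
    show "finite (wsum v ` Fs wt n W)" using Fs_finite by simp
    show "y \<le> wsum v S0" if yin: "y \<in> wsum v ` Fs wt n W" for y
    proof -
      obtain S where S: "S \<in> Fs wt n W" "y = wsum v S" using yin by blast
      then have "ereal (wsum v S) \<le> ereal (wsum v S0)" using ub S0(2) by simp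
      then show ?thesis using S(2) by simp
    qed
    show "wsum v S0 \<in> wsum v ` Fs wt n W" using S0(1) by simp
  qed
  then show ?thesis unfolding Os_def opt_sols_def feq using S0(2)[symmetric] by auto
qed

theorem theorem3:
  "\<exists>c::real. \<forall>(n::nat) (W::int) (wt::nat \<Rightarrow> int) (v::nat \<Rightarrow> int) (k::nat).
     W > 0 \<longrightarrow> (\<forall>i\<in>{1..n}. wt i > 0) \<longrightarrow> n \<ge> 1 \<longrightarrow> k \<ge> 1 \<longrightarrow>
       map_pmf fst (knapsack_sampler n wt v W k) = iid_list k (pmf_of_set (opt_sols n wt v W))
     \<and> (\<forall>r \<in> set_pmf (knapsack_sampler n wt v W k). real (snd r) \<le> c * real k * real n)"
proof (intro exI[of _ 23] allI impI conjI)
  fix n :: nat and W :: int and wt v :: "nat \<Rightarrow> int" and k :: nat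
  assume W: "W > 0" and pos: "\<forall>i\<in>{1..n}. wt i > 0" and n: "n \<ge> 1" and k: "k \<ge> 1"
  have "map_pmf fst (knapsack_sampler n wt v W k) = map_pmf (map fst) (iid_list k (sample_run wt v n W))"
    unfolding knapsack_sampler_def by (simp add: pmf.map_comp o_def)
  also have "\<dots> = iid_list k (map_pmf fst (sample_run wt v n W))" by (rule iid_map)
  also have "\<dots> = iid_list k (pmf_of_set (opt_sols n wt v W))"
    using sample_correct[OF pos, of W v] Os_opt[OF pos, of W v] W by simp
  finally show "map_pmf fst (knapsack_sampler n wt v W k) = iid_list k (pmf_of_set (opt_sols n wt v W))" .
next
  fix n :: nat and W :: int and wt v :: "nat \<Rightarrow> int" and k :: nat
  assume W: "W > 0" and pos: "\<forall>i\<in>{1..n}. wt i > 0" and n: "n \<ge> 1" and k: "k \<ge> 1"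
  show "\<forall>r \<in> set_pmf (knapsack_sampler n wt v W k). real (snd r) \<le> 23 * real k * real n"
  proof
    fix r assume "r \<in> set_pmf (knapsack_sampler n wt v W k)"
    then obtain rs where rs: "rs \<in> set_pmf (iid_list k (sample_run wt v n W))"
      "r = (map fst rs, sum_list (map snd rs))"
      unfolding knapsack_sampler_def by auto
    have "\<forall>x\<in>set rs. snd x \<le> 20 * n + 3" using iid_set[OF rs(1)] time_bound by blast
    then have "snd r \<le> length rs * (20 * n + 3)" using rs(2) sum_list_bound by simp
    also have "\<dots> = k * (20 * n + 3)" using iid_set[OF rs(1)] by simp
    also have "\<dots> \<le> k * (23 * n)" using n by simp
    finally have "snd r \<le> 23 * k * n" by simp
    then have "real (snd r) \<le> real (23 * k * n)" by linarith
    then show "real (snd r) \<le> 23 * real k * real n" by simp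
  qed
qed

thm_deps theorem3

end
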